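(* Let $N\ge 1$, let $x_1,\dots,x_{2N-1}\in\mathbb{C}$ and let $z_1,\dots,z_N\in\mathbb{C}$ be pairwise distinct and distinct from all $x_i$. Then $$-\sum_{r=1}^N\Big(\prod_{i=1}^{2N-1}(z_r-x_i)\Big)\Big(\prod_{s=1,\,s\ne r}^N\frac{1}{(z_r-z_s)^2}\Big)\Big(\sum_{i=1}^{2N-1}\frac{1}{2(z_r-x_i)}-\sum_{s=1,\,s\ne r}^N\frac{1}{z_r-z_s}\Big)=-\frac12 .$$ *)

theory Defs
  imports Complex_Main
begin

end

theory Submission
  imports Defs "HOL-Computational_Algebra.Polynomial"
begin

lemma pderiv_sum': "pderiv (sum f A) = (\<Sum>x\<in>A. pderiv (f x))"
  using higher_pderiv_sum[of 1 f A] by simp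

lemma pderiv_lin: "pderiv [:c, 1:] = 1"
  by (simp add: pderiv_pCons)

lemma logderiv:
  fixes y :: "nat \<Rightarrow> complex"
  assumes "finite A" "\<And>a. a\<in>A \<Longrightarrow> w \<noteq> y a"
  shows "poly (pderiv (\<Prod>a\<in>A. [:-y a,1:])) w = (\<Prod>a\<in>A. (w - y a)) * (\<Sum>a\<in>A. 1/(w - y a))"
proof -
  have "poly (pderiv (\<Prod>a\<in>A. [:-y a,1:])) w = (\<Sum>a\<in>A. \<Prod>b\<in>A-{a}. (w - y b))"
    by (simp add: pderiv_prod poly_sum poly_prod pderiv_lin)
  also have "\<dots> = (\<Sum>a\<in>A. (\<Prod>b\<in>A. (w - y b)) * (1/(w - y a)))"
  proof (rule sum.cong[OF refl])
    fix a assume a: "a \<in> A"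
    have "(\<Prod>b\<in>A. (w - y b)) = (w - y a) * (\<Prod>b\<in>A-{a}. (w - y b))"
      using prod.remove[OF assms(1) a] by simp
    then show "(\<Prod>b\<in>A-{a}. (w - y b)) = (\<Prod>b\<in>A. (w - y b)) * (1/(w - y a))"
      using assms(2)[OF a] by (simp add: field_simps)
  qed
  finally show ?thesis by (simp add: sum_distrib_left)
qed

lemma pderiv_sq: "pderiv ([:c,1:]^2) = smult 2 [:c::complex,1:]"
  by (simp add: power2_eq_square pderiv_pCons)

lemma double_root:
  fixes p :: "complex poly"
  assumes "poly p a = 0" "poly (pderiv p) a = 0"
  shows "\<exists>q. p = [:-a,1:]^2 * q"
proof -
  obtain q where q: "p = [:-a,1:] * q" using assms(1) poly_eq_0_iff_dvd by blast
  have "pderiv p = [:-a,1:] * pderiv q + q * 1" by (simp only: q pderiv_mult pderiv_lin)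
  then have "poly q a = 0" using assms(2) by simp
  then obtain q' where q': "q = [:-a,1:] * q'" using poly_eq_0_iff_dvd by blast
  have "p = [:-a,1:]^2 * q'" by (simp only: q q' power2_eq_square mult.assoc)
  then show ?thesis by blast
qed

lemma double_roots_dvd:
  fixes p :: "complex poly"
  assumes "finite S" "\<forall>a\<in>S. poly p a = 0 \<and> poly (pderiv p) a = 0"
  shows "(\<Prod>a\<in>S. [:-a,1:]^2) dvd p"
  using assms
proof (induction S arbitrary: p rule: finite_induct)
  case empty then show ?case by simp
next
  case (insert a S)
  then obtain q where q: "p = [:-a,1:]^2 * q" using double_root by blast
  have "\<forall>b\<in>S. poly q b = 0 \<and> poly (pderiv q) b = 0"
  proof
    fix b assume b: "b \<in> S"
    then have ba: "b \<noteq> a" using insert by auto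
    have "poly p b = 0" "poly (pderiv p) b = 0" using insert b by auto
    moreover have d: "pderiv p = [:-a,1:]^2 * pderiv q + q * smult 2 [:-a,1:]"
      by (simp only: q pderiv_mult pderiv_sq)
    moreover have "poly p b = (b - a)^2 * poly q b" by (simp add: q)
    moreover have "poly (pderiv p) b = (b - a)^2 * poly (pderiv q) b + poly q b * (2 * (b - a))"
      by (simp only: d poly_mult poly_add poly_power poly_smult) simp
    ultimately have e1: "(b - a)^2 * poly q b = 0"
      and e2: "2 * (b - a) * poly q b + (b-a)^2 * poly (pderiv q) b = 0"
      by (simp_all add: algebra_simps)
    from e1 ba have "poly q b = 0" by simp
    with e2 ba show "poly q b = 0 \<and> poly (pderiv q) b = 0" by simp
  qed
  then have "(\<Prod>a\<in>S. [:-a,1:]^2) dvd q" using insert by blast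
  then show ?case unfolding q using insert by (simp add: mult_dvd_mono)
qed

lemma pderiv_term:
  fixes Q :: "complex poly"
  shows "poly (pderiv (smult a ([:-w,1:] * Q^2) + smult b (Q^2))) t
     = a * ((poly Q t)^2 + (t - w) * 2 * poly Q t * poly (pderiv Q) t) + b * 2 * poly Q t * poly (pderiv Q) t"
proof -
  have "pderiv (smult a ([:-w,1:] * Q^2) + smult b (Q^2)) = smult a ([:-w,1:] * (Q*pderiv Q + Q*pderiv Q) + Q^2 * 1) + smult b (Q * pderiv Q + Q*pderiv Q)"
    by (simp only: pderiv_add pderiv_smult pderiv_mult pderiv_lin power2_eq_square)
  then show ?thesis by (simp add: algebra_simps power2_eq_square)
qed


lemma degree_linprod: "finite B \<Longrightarrow> degree (\<Prod>s\<in>B. [:-(f s::complex),1:]) = card B"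
  by (subst degree_prod_eq_sum_degree) auto

lemma lead_linprod: "lead_coeff (\<Prod>s\<in>B. [:-(f s::complex),1:]) = 1"
  by (simp add: lead_coeff_prod)

lemma linprod_nz: "(\<Prod>s\<in>B. [:-(f s::complex),1:]) \<noteq> 0"
  using lead_linprod[of f B] by auto

theorem mainTheorem2:
  fixes N :: nat and x z :: "nat \<Rightarrow> complex"
  assumes "N \<ge> 1"
    and "\<And>r s. r \<in> {1..N} \<Longrightarrow> s \<in> {1..N} \<Longrightarrow> r \<noteq> s \<Longrightarrow> z r \<noteq> z s"
    and "\<And>r i. r \<in> {1..N} \<Longrightarrow> i \<in> {1..2*N-1} \<Longrightarrow> z r \<noteq> x i"
  shows "- (\<Sum>r=1..N. (\<Prod>i=1..2*N-1. z r - x i)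
            * (\<Prod>s\<in>{1..N}-{r}. 1 / (z r - z s)^2)
            * ((\<Sum>i=1..2*N-1. 1 / (2 * (z r - x i))) - (\<Sum>s\<in>{1..N}-{r}. 1 / (z r - z s))))
         = - 1 / 2"
proof -
  define A where "A = {1..N}"
  define I where "I = {1..2*N-1}"
  have fA: "finite A" and fI: "finite I" by (simp_all add: A_def I_def)
  have cA: "card A = N" and cI: "card I = 2*N-1" by (simp_all add: A_def I_def)
  have zd: "\<And>r s. r \<in> A \<Longrightarrow> s \<in> A \<Longrightarrow> r \<noteq> s \<Longrightarrow> z r \<noteq> z s" using assms(2) A_def by blast
  have zx: "\<And>r i. r \<in> A \<Longrightarrow> i \<in> I \<Longrightarrow> z r \<noteq> x i" using assms(3) A_def I_def by blast
  define P where "P = (\<Prod>i\<in>I. [:-x i,1:])"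
  define L where "L r = (\<Prod>s\<in>A-{r}. [:-z s,1:])" for r
  define c where "c r = (\<Prod>s\<in>A-{r}. (z r - z s))" for r
  define D where "D r = (\<Sum>s\<in>A-{r}. 1/(z r - z s))" for r
  define Pv where "Pv r = (\<Prod>i\<in>I. (z r - x i))" for r
  define S where "S r = (\<Sum>i\<in>I. 1/(z r - x i))" for r
  define \<beta> where "\<beta> r = Pv r / (c r)^2" for r
  define \<alpha> where "\<alpha> r = (Pv r * S r - 2 * Pv r * D r) / (c r)^2" for r
  define H where "H = (\<Sum>r\<in>A. smult (\<alpha> r) ([:-z r,1:] * (L r)^2) + smult (\<beta> r) ((L r)^2))"
  have cnz: "c r \<noteq> 0" if "r \<in> A" for r
    using zd that fA by (auto simp: c_def prod_zero_iff)
  have L0: "poly (L s) (z r) = 0" if "r \<in> A" "s \<in> A" "r \<noteq> s" for r s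
    using that fA by (auto simp: L_def poly_prod prod_zero_iff)
  have Lr: "poly (L r) (z r) = c r" for r by (simp add: L_def c_def poly_prod)
  have Ldr: "poly (pderiv (L r)) (z r) = c r * D r" if "r \<in> A" for r
    unfolding L_def c_def D_def using fA zd that by (intro logderiv) auto
  have Pzr: "poly P (z r) = Pv r" for r by (simp add: P_def Pv_def poly_prod)
  have Pdr: "poly (pderiv P) (z r) = Pv r * S r" if "r \<in> A" for r
    unfolding P_def Pv_def S_def using fI zx that by (intro logderiv) auto
  have Hr: "poly H (z r) = Pv r" if r: "r \<in> A" for r
  proof -
    have "poly H (z r) = (\<Sum>s\<in>A. \<alpha> s * (z r - z s) * (poly (L s) (z r))^2 + \<beta> s * (poly (L s) (z r))^2)"
      by (simp add: H_def poly_sum algebra_simps)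
    also have "\<dots> = \<alpha> r * (z r - z r) * (poly (L r) (z r))^2 + \<beta> r * (poly (L r) (z r))^2
        + (\<Sum>s\<in>A-{r}. \<alpha> s * (z r - z s) * (poly (L s) (z r))^2 + \<beta> s * (poly (L s) (z r))^2)"
      by (subst sum.remove[OF fA r]) simp
    also have "(\<Sum>s\<in>A-{r}. \<alpha> s * (z r - z s) * (poly (L s) (z r))^2 + \<beta> s * (poly (L s) (z r))^2) = 0"
      using L0 r by (intro sum.neutral) auto
    finally show ?thesis using cnz[OF r] by (simp add: Lr \<beta>_def)
  qed
  have Hdr: "poly (pderiv H) (z r) = Pv r * S r" if r: "r \<in> A" for r
  proof -
    define g where "g s = \<alpha> s * ((poly (L s) (z r))^2 + (z r - z s) * 2 * poly (L s) (z r) * poly (pderiv (L s)) (z r))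
       + \<beta> s * 2 * poly (L s) (z r) * poly (pderiv (L s)) (z r)" for s
    have "poly (pderiv H) (z r) = (\<Sum>s\<in>A. g s)"
      unfolding H_def pderiv_sum' poly_sum pderiv_term g_def by (rule refl)
    also have "\<dots> = g r + (\<Sum>s\<in>A-{r}. g s)"
      using sum.remove[OF fA r] by simp
    also have "(\<Sum>s\<in>A-{r}. g s) = 0"
      using L0 r by (intro sum.neutral) (auto simp: g_def)
    finally show ?thesis using cnz[OF r]
      by (simp add: g_def Lr Ldr[OF r] \<alpha>_def \<beta>_def field_simps power2_eq_square)
  qed
  define p where "p = P - H"
  have degL: "degree (L r) = N - 1" if "r \<in> A" for r
    using that fA cA by (simp add: L_def degree_linprod)
  have degP: "degree P = 2*N-1" using fI cI by (simp add: P_def degree_linprod)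
  have degT: "degree ([:-z r,1:] * (L r)^2) = 2*N-1" if "r \<in> A" for r
  proof -
    have "degree ([:-z r,1:] * (L r)^2) = degree [:-z r,1:] + degree ((L r)^2)"
      by (rule degree_mult_eq) (auto simp: L_def linprod_nz)
    also have "\<dots> = 1 + 2 * (N - 1)"
      using degL[OF that] by (simp add: degree_power_eq L_def linprod_nz)
    finally show ?thesis using assms(1) by simp
  qed
  have degL2: "degree ((L r)^2) = 2*N-2" if "r \<in> A" for r
    using degL[OF that] by (simp add: degree_power_eq L_def linprod_nz)
  have degH: "degree H \<le> 2*N-1"
    unfolding H_def
  proof (rule degree_sum_le[OF fA])
    fix r assume r: "r \<in> A"
    show "degree (smult (\<alpha> r) ([:-z r,1:] * (L r)^2) + smult (\<beta> r) ((L r)^2)) \<le> 2*N-1"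
      using degT[OF r] degL2[OF r] degree_smult_le[of "\<alpha> r" "[:-z r,1:] * (L r)^2"]
        degree_smult_le[of "\<beta> r" "(L r)^2"]
      by (intro degree_add_le) auto
  qed
  have degp: "degree p \<le> 2*N-1" unfolding p_def
    by (rule degree_diff_le[OF _ degH]) (simp add: degP)
  have p0: "p = 0"
  proof (rule ccontr)
    assume pnz: "p \<noteq> 0"
    have "(\<Prod>a\<in>z`A. [:-a,1:]^2) dvd p"
    proof (rule double_roots_dvd)
      show "finite (z`A)" using fA by simp
      show "\<forall>a\<in>z`A. poly p a = 0 \<and> poly (pderiv p) a = 0"
        using Hr Hdr Pzr Pdr by (auto simp: p_def pderiv_diff)
    qed
    then have "degree (\<Prod>a\<in>z`A. [:-a,1:]^2) \<le> degree p"
      using pnz by (rule dvd_imp_degree_le)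
    moreover have "degree (\<Prod>a\<in>z`A. [:-a,1:]^2) = 2 * card (z`A)"
      by (subst degree_prod_eq_sum_degree) (auto simp: degree_linear_power)
    moreover have "card (z`A) = N"
      using cA zd by (subst card_image) (auto simp: inj_on_def)
    ultimately show False using degp assms(1) by linarith
  qed
  have "coeff P (2*N-1) = coeff H (2*N-1)" using p0 by (simp add: p_def)
  moreover have "coeff P (2*N-1) = 1"
    using degP lead_linprod[of x I] by (simp add: P_def)
  moreover have "coeff H (2*N-1) = (\<Sum>r\<in>A. \<alpha> r)"
    unfolding H_def coeff_sum
  proof (rule sum.cong[OF refl])
    fix r assume r: "r \<in> A"
    have "coeff ([:-z r,1:] * (L r)^2) (2*N-1) = 1"
    proof -
      have lc: "lead_coeff ([:-z r,1:] * (L r)^2) = 1"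
        by (simp only: lead_coeff_mult lead_coeff_power L_def lead_linprod) simp
      show ?thesis using lc[unfolded degT[OF r]] .
    qed
    moreover have "coeff ((L r)^2) (2*N-1) = 0"
      using degL2[OF r] assms(1) by (intro coeff_eq_0) simp
    ultimately show "coeff (smult (\<alpha> r) ([:-z r,1:] * (L r)^2) + smult (\<beta> r) ((L r)^2)) (2*N-1) = \<alpha> r"
      by simp
  qed
  ultimately have sa: "(\<Sum>r\<in>A. \<alpha> r) = 1" by simp
  have "(\<Sum>r=1..N. (\<Prod>i=1..2*N-1. z r - x i)
            * (\<Prod>s\<in>{1..N}-{r}. 1 / (z r - z s)^2)
            * ((\<Sum>i=1..2*N-1. 1 / (2 * (z r - x i))) - (\<Sum>s\<in>{1..N}-{r}. 1 / (z r - z s))))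
      = (\<Sum>r\<in>A. \<alpha> r / 2)"
    unfolding A_def[symmetric] I_def[symmetric]
  proof (rule sum.cong[OF refl])
    fix r assume r: "r \<in> A"
    have e1: "(\<Prod>s\<in>A-{r}. 1 / (z r - z s)^2) = 1 / (c r)^2"
      by (simp add: c_def prod_dividef prod_power_distrib)
    have e2: "(\<Sum>i\<in>I. 1 / (2 * (z r - x i))) = S r / 2"
      by (simp add: S_def sum_divide_distrib mult.commute)
    show "(\<Prod>i\<in>I. z r - x i) * (\<Prod>s\<in>A-{r}. 1 / (z r - z s)^2)
        * ((\<Sum>i\<in>I. 1 / (2 * (z r - x i))) - (\<Sum>s\<in>A-{r}. 1 / (z r - z s))) = \<alpha> r / 2"
      unfolding e1 e2 using cnz[OF r]
      by (simp add: \<alpha>_def Pv_def[symmetric] D_def[symmetric] field_simps)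
  qed
  also have "\<dots> = 1/2" using sa by (simp add: sum_divide_distrib[symmetric])
  finally show ?thesis by simp
qed

end
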